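(* There exists a diameter-perfect code of minimum distance $2r$ in $(\mathbb Z^m,d_a)$ in each of the following cases: (i) $m\in\{1,2\}$ and $r\ge1$ arbitrary; (ii) $m\ge3$ and $r=1$.
   Context: $d_a(\mathbf x,\mathbf y)=\max\{\sum_{i:x_i>y_i}(x_i-y_i),\sum_{i:x_i<y_i}(y_i-x_i)\}$ on $\mathbb Z^m$; the minimum distance $d_a(\mathcal C)$ of a code is the minimum distance between distinct codewords. An anticode of diameter $D$ is a subset of $\mathbb Z^m$ whose points are pairwise at $d_a$-distance at most $D$. The density of $\mathcal C$ is $\mu(\mathcal C)=\lim_{k\to\infty}|\mathcal C\cap\{-k,\dots,k\}^m|/(2k+1)^m$. A code $\mathcal C$ with minimum distance $d$ is diameter-perfect if its density exists and there is a finite anticode $S$ of diameter $d-1$ with $\mu(\mathcal C)\cdot|S|=1$. *)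

theory Defs
  imports Complex_Main
begin

text \<open>Points of Z^m are represented as functions nat => int vanishing outside {0..<m}.\<close>

definition lattice_pts :: "nat \<Rightarrow> (nat \<Rightarrow> int) set" where
  "lattice_pts m = {x. \<forall>i\<ge>m. x i = 0}"

definition dist_a :: "nat \<Rightarrow> (nat \<Rightarrow> int) \<Rightarrow> (nat \<Rightarrow> int) \<Rightarrow> int" where
  "dist_a m x y = max (\<Sum>i\<in>{i. i < m \<and> x i > y i}. x i - y i)
                      (\<Sum>i\<in>{i. i < m \<and> x i < y i}. y i - x i)"

definition has_min_dist :: "nat \<Rightarrow> (nat \<Rightarrow> int) set \<Rightarrow> int \<Rightarrow> bool" where
  "has_min_dist m C d \<longleftrightarrow>
     (\<forall>x\<in>C. \<forall>y\<in>C. x \<noteq> y \<longrightarrow> dist_a m x y \<ge> d) \<and>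
     (\<exists>x\<in>C. \<exists>y\<in>C. x \<noteq> y \<and> dist_a m x y = d)"

definition is_anticode :: "nat \<Rightarrow> (nat \<Rightarrow> int) set \<Rightarrow> int \<Rightarrow> bool" where
  "is_anticode m S D \<longleftrightarrow> S \<subseteq> lattice_pts m \<and>
     (\<forall>x\<in>S. \<forall>y\<in>S. dist_a m x y \<le> D)"

definition box :: "nat \<Rightarrow> nat \<Rightarrow> (nat \<Rightarrow> int) set" where
  "box m k = {x \<in> lattice_pts m. \<forall>i<m. - int k \<le> x i \<and> x i \<le> int k}"

definition density_seq :: "nat \<Rightarrow> (nat \<Rightarrow> int) set \<Rightarrow> nat \<Rightarrow> real" where
  "density_seq m C k = real (card (C \<inter> box m k)) / (2 * real k + 1) ^ m"

definition diameter_perfect :: "nat \<Rightarrow> (nat \<Rightarrow> int) set \<Rightarrow> int \<Rightarrow> bool" where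
  "diameter_perfect m C d \<longleftrightarrow>
     C \<subseteq> lattice_pts m \<and> has_min_dist m C d \<and>
     (\<exists>\<mu>. density_seq m C \<longlonglongrightarrow> \<mu> \<and>
        (\<exists>S. finite S \<and> is_anticode m S (d - 1) \<and> \<mu> * real (card S) = 1))"

end

theory Submission
  imports Defs
begin

lemma dist_a_alt: "dist_a m x y = max (\<Sum>i<m. max (x i - y i) 0) (\<Sum>i<m. max (y i - x i) 0)"
proof -
  have 1: "(\<Sum>i\<in>{i. i < m \<and> x i > y i}. x i - y i) = (\<Sum>i<m. max (x i - y i) 0)"
  proof -
    have eq: "{i. i < m \<and> x i > y i} = {i\<in>{..<m}. x i > y i}" by auto
    have "(\<Sum>i\<in>{i. i < m \<and> x i > y i}. x i - y i) = (\<Sum>i<m. if x i > y i then x i - y i else 0)"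
      unfolding eq by (rule sum.inter_filter) simp
    also have "\<dots> = (\<Sum>i<m. max (x i - y i) 0)" by (rule sum.cong) auto
    finally show ?thesis .
  qed
  have 2: "(\<Sum>i\<in>{i. i < m \<and> x i < y i}. y i - x i) = (\<Sum>i<m. max (y i - x i) 0)"
  proof -
    have eq: "{i. i < m \<and> x i < y i} = {i\<in>{..<m}. x i < y i}" by auto
    have "(\<Sum>i\<in>{i. i < m \<and> x i < y i}. y i - x i) = (\<Sum>i<m. if x i < y i then y i - x i else 0)"
      unfolding eq by (rule sum.inter_filter) simp
    also have "\<dots> = (\<Sum>i<m. max (y i - x i) 0)" by (rule sum.cong) auto
    finally show ?thesis .
  qed
  show ?thesis unfolding dist_a_def 1 2 ..
qed

lemma finite_box: "finite (box n k)"
proof (induction n)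
  case 0
  have "box 0 k \<subseteq> {\<lambda>_. 0}" by (auto simp: box_def lattice_pts_def)
  then show ?case using finite_subset by blast
next
  case (Suc n)
  have "box (Suc n) k \<subseteq> (\<lambda>(y,t). y(n:=t)) ` (box n k \<times> {-int k..int k})"
  proof
    fix x assume x: "x \<in> box (Suc n) k"
    have "x(n:=0) \<in> box n k" using x by (auto simp: box_def lattice_pts_def)
    moreover have "x n \<in> {-int k..int k}" using x by (auto simp: box_def)
    moreover have "x = (x(n:=0))(n := x n)" by simp
    ultimately show "x \<in> (\<lambda>(y,t). y(n:=t)) ` (box n k \<times> {-int k..int k})"
      by (intro rev_image_eqI[of "(x(n:=0), x n)"]) auto
  qed
  then show ?case using Suc finite_subset by blast
qed

lemma box_fiber:
  assumes "C \<subseteq> lattice_pts (Suc n)"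
  shows "card (C \<inter> box (Suc n) k) = (\<Sum>y\<in>box n k. card {t\<in>{-int k..int k}. y(n:=t) \<in> C})"
proof -
  let ?B = "\<lambda>y. {t\<in>{-int k..int k}. y(n:=t) \<in> C}"
  have "bij_betw (\<lambda>x. (x(n:=0), x n)) (C \<inter> box (Suc n) k) (SIGMA y:box n k. ?B y)"
  proof (rule bij_betw_byWitness[where f' = "\<lambda>(y,t). y(n:=t)"])
    show "\<forall>a\<in>C \<inter> box (Suc n) k. (\<lambda>(y, t). y(n := t)) (a(n := 0), a n) = a" by auto
    show "\<forall>a'\<in>SIGMA y:box n k. ?B y. (\<lambda>x. (x(n := 0), x n)) ((\<lambda>(y, t). y(n := t)) a') = a'"
    proof
      fix a' assume "a' \<in> (SIGMA y:box n k. ?B y)"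
      then obtain y t where a': "a' = (y,t)" "y \<in> box n k" by auto
      then have "y n = 0" by (auto simp: box_def lattice_pts_def)
      then have "(y(n:=t))(n:=0) = y" by (auto simp: fun_eq_iff)
      then show "(\<lambda>x. (x(n := 0), x n)) ((\<lambda>(y, t). y(n := t)) a') = a'" using a' by simp
    qed
    show "(\<lambda>x. (x(n := 0), x n)) ` (C \<inter> box (Suc n) k) \<subseteq> (SIGMA y:box n k. ?B y)"
      using assms by (auto simp: box_def lattice_pts_def)
    show "(\<lambda>(y, t). y(n := t)) ` (SIGMA y:box n k. ?B y) \<subseteq> C \<inter> box (Suc n) k"
      by (auto simp: box_def lattice_pts_def)
  qed
  then have "card (C \<inter> box (Suc n) k) = card (SIGMA y:box n k. ?B y)" by (rule bij_betw_same_card)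
  also have "\<dots> = (\<Sum>y\<in>box n k. card (?B y))" by (rule card_SigmaI) (auto simp: finite_box intro: rev_finite_subset[OF finite_atLeastAtMost_int])
  finally show ?thesis .
qed


lemma card_box: "card (box n k) = (2 * k + 1) ^ n"
proof (induction n)
  case 0
  have "box 0 k = {\<lambda>_. 0}" by (auto simp: box_def lattice_pts_def)
  then show ?case by simp
next
  case (Suc n)
  have "box (Suc n) k = lattice_pts (Suc n) \<inter> box (Suc n) k" by (auto simp: box_def)
  also have "card \<dots> = (\<Sum>y\<in>box n k. card {t\<in>{-int k..int k}. y(n:=t) \<in> lattice_pts (Suc n)})"
    by (rule box_fiber) simp
  also have "\<dots> = (\<Sum>y\<in>box n k. card {-int k..int k})"
  proof (rule sum.cong)
    fix y assume "y \<in> box n k"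
    then have "\<And>t. y(n:=t) \<in> lattice_pts (Suc n)" by (auto simp: box_def lattice_pts_def)
    then have "{t\<in>{-int k..int k}. y(n:=t) \<in> lattice_pts (Suc n)} = {-int k..int k}" by blast
    then show "card {t\<in>{-int k..int k}. y(n:=t) \<in> lattice_pts (Suc n)} = card {-int k..int k}" by simp
  qed simp
  also have "\<dots> = (2 * k + 1) ^ n * (2 * k + 1)" using Suc by (simp add: nat_add_distrib)
  finally show ?case by simp
qed

lemma count1:
  fixes N lo hi c :: int
  assumes N: "N > 0" and lohi: "lo \<le> hi"
  shows "\<bar>N * int (card {t\<in>{lo..hi}. t mod N = c mod N}) - (hi - lo + 1)\<bar> \<le> 3 * N"
proof -
  define S where "S = {t\<in>{lo..hi}. t mod N = c mod N}"
  define g where "g = (\<lambda>t::int. t div N)"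
  define A where "A = hi div N"
  define B where "B = lo div N"
  have inj: "inj_on g S"
  proof (rule inj_onI)
    fix s t assume "s \<in> S" "t \<in> S" "g s = g t"
    then have "s div N = t div N" "s mod N = t mod N" by (auto simp: S_def g_def)
    then show "s = t" by (metis div_mult_mod_eq)
  qed
  have up: "g ` S \<subseteq> {B..A}"
    using N by (auto simp: S_def g_def A_def B_def intro!: zdiv_mono1)
  have low: "{B+1..A-1} \<subseteq> g ` S"
  proof
    fix j assume j: "j \<in> {B+1..A-1}"
    define t where "t = N * j + c mod N"
    have cm: "0 \<le> c mod N" "c mod N < N" using N by auto
    have tdiv: "t div N = j" unfolding t_def using cm N by simp
    have tmod: "t mod N = c mod N" unfolding t_def using cm N by simp
    have "N * B + N \<le> N * j" using mult_left_mono[of "B+1" j N] j N by (simp add: algebra_simps)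
    moreover have "N * B \<ge> lo - N + 1" unfolding B_def using N
      by (smt (verit) div_mult_mod_eq mult.commute pos_mod_bound)
    moreover have "N * j + N \<le> N * A" using mult_left_mono[of "j+1" A N] j N by (simp add: algebra_simps)
    moreover have "N * A \<le> hi" unfolding A_def using N
      by (smt (verit) div_mult_mod_eq mult.commute pos_mod_sign)
    ultimately have "t \<in> {lo..hi}" unfolding t_def using cm by auto
    then have "t \<in> S" using tmod by (simp add: S_def)
    then show "j \<in> g ` S" using tdiv by (auto simp: g_def intro: rev_image_eqI)
  qed
  have fS: "finite S" unfolding S_def by (rule finite_subset[of _ "{lo..hi}"]) auto
  have c1: "card S = card (g ` S)" using inj by (simp add: card_image)
  have c2: "card (g ` S) \<le> nat (A - B + 1)"
    using card_mono[OF _ up] by simp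
  have c3: "nat (A - 1 - (B + 1) + 1) \<le> card (g ` S)"
    using card_mono[OF _ low] fS by simp
  have hA: "N * A \<le> hi" "hi < N * A + N" unfolding A_def using N
    by (smt (verit) div_mult_mod_eq mult.commute pos_mod_sign pos_mod_bound)+
  have hB: "N * B \<le> lo" "lo < N * B + N" unfolding B_def using N
    by (smt (verit) div_mult_mod_eq mult.commute pos_mod_sign pos_mod_bound)+
  have AB: "B \<le> A" unfolding A_def B_def using lohi N by (simp add: zdiv_mono1)
  have u: "int (card S) \<le> A - B + 1" using c1 c2 AB by simp
  have l: "int (card S) \<ge> A - B - 1" using c1 c3 by simp
  have u2: "N * int (card S) \<le> N * (A - B + 1)" using u N by (simp add: mult_left_mono)
  have l2: "N * int (card S) \<ge> N * (A - B - 1)" using l N by (simp add: mult_left_mono)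
  show ?thesis unfolding S_def[symmetric] using u2 l2 hA hB by (simp add: algebra_simps abs_le_iff)
qed

lemma sum_approx:
  fixes f :: "'a \<Rightarrow> real"
  assumes "finite A" "\<And>y. y \<in> A \<Longrightarrow> \<bar>f y - c\<bar> \<le> e"
  shows "\<bar>sum f A - real (card A) * c\<bar> \<le> real (card A) * e"
proof -
  have "sum f A - real (card A) * c = (\<Sum>y\<in>A. f y - c)" by (simp add: sum_subtractf)
  also have "\<bar>\<dots>\<bar> \<le> (\<Sum>y\<in>A. \<bar>f y - c\<bar>)" by (rule sum_abs)
  also have "\<dots> \<le> (\<Sum>y\<in>A. e)" by (rule sum_mono) (rule assms(2))
  finally show ?thesis by simp
qed

lemma dens_lim:
  fixes N B :: real
  assumes N: "N > 0"
    and bnd: "\<And>k. \<bar>N * real (card (C \<inter> box (Suc n) k)) - (2 * real k + 1) ^ Suc n\<bar> \<le> B * (2 * real k + 1) ^ n"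
  shows "density_seq (Suc n) C \<longlonglongrightarrow> 1 / N"
proof (rule tendsto_sandwich)
  define e where "e = (\<lambda>k::nat. B / (N * (2 * real k + 1)))"
  have g0: "(\<lambda>k::nat. inverse (2 * real k + 1)) \<longlonglongrightarrow> 0"
  proof (rule tendsto_sandwich[OF _ _ tendsto_const LIMSEQ_inverse_real_of_nat])
    show "\<forall>\<^sub>F k in sequentially. 0 \<le> inverse (2 * real k + 1)" by simp
    show "\<forall>\<^sub>F k in sequentially. inverse (2 * real k + 1) \<le> inverse (real (Suc k))"
      by (intro always_eventually allI) (simp add: le_imp_inverse_le)
  qed
  have e0: "e \<longlonglongrightarrow> 0"
  proof -
    have "(\<lambda>k. (B / N) * inverse (2 * real k + 1)) \<longlonglongrightarrow> (B / N) * 0"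
      by (rule tendsto_mult[OF tendsto_const g0])
    moreover have "e = (\<lambda>k. (B / N) * inverse (2 * real k + 1))"
      by (auto simp: e_def fun_eq_iff field_simps)
    ultimately show ?thesis by simp
  qed
  have key: "\<bar>density_seq (Suc n) C k - 1 / N\<bar> \<le> e k" for k
  proof -
    define P where "P = (2 * real k + 1)"
    have P: "P > 0" by (simp add: P_def)
    define c where "c = real (card (C \<inter> box (Suc n) k))"
    have d: "density_seq (Suc n) C k = c / P ^ Suc n" by (simp add: density_seq_def c_def P_def)
    have Pn: "P ^ Suc n > 0" using P by simp
    have "c / P ^ Suc n - 1 / N = (c * N - 1 * P ^ Suc n) / (P ^ Suc n * N)"
      using N Pn by (intro diff_frac_eq) auto
    then have "density_seq (Suc n) C k - 1 / N = (N * c - P ^ Suc n) / (N * P ^ Suc n)"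
      unfolding d by (simp add: mult.commute)
    then have "\<bar>density_seq (Suc n) C k - 1 / N\<bar> = \<bar>N * c - P ^ Suc n\<bar> / (N * P ^ Suc n)"
      using N P by (simp add: abs_divide)
    also have "\<dots> \<le> B * P ^ n / (N * P ^ Suc n)"
      using bnd[of k] N P by (intro divide_right_mono) (auto simp: c_def P_def)
    also have "\<dots> = e k"
    proof -
      have Q: "P ^ n > 0" using P by simp
      have "B * P ^ n / (N * (P * P ^ n)) = B / (N * P)" using Q N P by (simp add: field_simps)
      then show ?thesis by (simp add: e_def P_def)
    qed
    finally show ?thesis .
  qed
  show "\<forall>\<^sub>F k in sequentially. 1 / N - e k \<le> density_seq (Suc n) C k"
    using key by (auto simp: abs_le_iff intro!: always_eventually) (smt (verit) key)
  show "\<forall>\<^sub>F k in sequentially. density_seq (Suc n) C k \<le> 1 / N + e k"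
    using key by (auto simp: abs_le_iff intro!: always_eventually) (smt (verit) key)
  show "(\<lambda>k. 1 / N - e k) \<longlonglongrightarrow> 1 / N" using tendsto_diff[OF tendsto_const e0] by simp
  show "(\<lambda>k. 1 / N + e k) \<longlonglongrightarrow> 1 / N" using tendsto_add[OF tendsto_const e0] by simp
qed


lemma count1_real:
  fixes N c :: int
  assumes "N > 0"
  shows "\<bar>real_of_int N * real (card {t\<in>{-int k..int k}. t mod N = c mod N}) - (2 * real k + 1)\<bar> \<le> 3 * real_of_int N"
proof -
  have "\<bar>N * int (card {t\<in>{-int k..int k}. t mod N = c mod N}) - (int k - (- int k) + 1)\<bar> \<le> 3 * N"
    by (rule count1) (use assms in auto)
  then have "real_of_int \<bar>N * int (card {t\<in>{-int k..int k}. t mod N = c mod N}) - (int k - (- int k) + 1)\<bar> \<le> real_of_int (3 * N)"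
    by linarith
  then show ?thesis by simp
qed

lemma box0: "box 0 k = {\<lambda>_. 0}" by (auto simp: box_def lattice_pts_def)

definition pt1 :: "int \<Rightarrow> nat \<Rightarrow> int" where "pt1 a = (\<lambda>i. if i = 0 then a else 0)"


lemma dist1x: "dist_a (Suc 0) x y = \<bar>x 0 - y 0\<bar>"
proof -
  have "dist_a (Suc 0) x y = max (max (x 0 - y 0) 0) (max (y 0 - x 0) 0)"
    by (simp add: dist_a_alt)
  also have "\<dots> = \<bar>x 0 - y 0\<bar>" by (simp add: max_def abs_if)
  finally show ?thesis .
qed
lemma lat1_eqx:
  assumes "x \<in> lattice_pts (Suc 0)" "y \<in> lattice_pts (Suc 0)" "x 0 = y 0" shows "x = y"
proof
  fix i show "x i = y i"
  proof (cases "i = 0")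
    case True then show ?thesis using assms by simp
  next
    case False then have "i \<ge> 1" by simp
    then show ?thesis using assms unfolding lattice_pts_def by auto
  qed
qed
lemma case1:
  assumes r: "r \<ge> 1"
  shows "\<exists>C. diameter_perfect (Suc 0) C (2 * int r)"
proof -
  define N where "N = 2 * int r"
  have N: "N > 0" using r by (simp add: N_def)
  define C where "C = {x\<in>lattice_pts (Suc 0). N dvd x 0}"
  have sub: "C \<subseteq> lattice_pts (Suc 0)" by (auto simp: C_def)
  have md: "has_min_dist (Suc 0) C N"
    unfolding has_min_dist_def
  proof (intro conjI ballI impI)
    fix x y assume xy: "x \<in> C" "y \<in> C" "x \<noteq> y"
    then have "x 0 \<noteq> y 0" using lat1_eqx by (auto simp: C_def)
    moreover have "N dvd x 0 - y 0" using xy by (auto simp: C_def)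
    ultimately have "\<bar>N\<bar> \<le> \<bar>x 0 - y 0\<bar>" by (intro dvd_imp_le_int) auto
    then show "N \<le> dist_a (Suc 0) x y" using N by (simp add: dist1x)
  next
    show "\<exists>x\<in>C. \<exists>y\<in>C. x \<noteq> y \<and> dist_a (Suc 0) x y = N"
    proof -
      have "pt1 0 \<in> C" "pt1 N \<in> C" by (auto simp: C_def pt1_def lattice_pts_def)
      moreover have "pt1 0 \<noteq> pt1 N" using N by (auto simp: pt1_def fun_eq_iff)
      moreover have "dist_a (Suc 0) (pt1 0) (pt1 N) = N" using N by (simp add: dist1x pt1_def)
      ultimately show ?thesis by blast
    qed
  qed
  have dens: "density_seq (Suc 0) C \<longlonglongrightarrow> 1 / real_of_int N"
  proof -
    have "density_seq (Suc 0) C \<longlonglongrightarrow> 1 / real_of_int N"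
    proof (rule dens_lim[where B = "3 * real_of_int N"])
      show "real_of_int N > 0" using N by simp
      fix k
      have "card (C \<inter> box (Suc 0) k) = (\<Sum>y\<in>box 0 k. card {t\<in>{-int k..int k}. y(0:=t) \<in> C})"
        using sub by (intro box_fiber) simp
      also have "\<dots> = card {t\<in>{-int k..int k}. t mod N = 0 mod N}"
      proof -
        have "{t\<in>{-int k..int k}. (\<lambda>_. 0::int)(0:=t) \<in> C} = {t\<in>{-int k..int k}. t mod N = 0 mod N}"
          by (auto simp: C_def lattice_pts_def dvd_eq_mod_eq_0)
        then show ?thesis by (simp add: box0)
      qed
      finally have "card (C \<inter> box (Suc 0) k) = card {t\<in>{-int k..int k}. t mod N = 0 mod N}" .
      then show "\<bar>real_of_int N * real (card (C \<inter> box (Suc 0) k)) - (2 * real k + 1) ^ Suc 0\<bar>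
          \<le> 3 * real_of_int N * (2 * real k + 1) ^ 0"
        using count1_real[OF N, of k 0] by simp
    qed
    then show ?thesis .
  qed
  define S where "S = pt1 ` {0..<N}"
  have injS: "inj_on pt1 {0..<N}"
  proof (rule inj_onI)
    fix a b assume "pt1 a = pt1 b"
    then have "pt1 a 0 = pt1 b 0" by simp
    then show "a = b" by (simp add: pt1_def)
  qed
  have cardS: "card S = N" unfolding S_def using injS N by (simp add: card_image)
  have anti: "is_anticode (Suc 0) S (N - 1)"
    unfolding is_anticode_def S_def by (auto simp: lattice_pts_def pt1_def dist1x)
  have "diameter_perfect (Suc 0) C N"
    unfolding diameter_perfect_def
  proof (intro conjI exI)
    show "C \<subseteq> lattice_pts (Suc 0)" by (rule sub)
    show "has_min_dist (Suc 0) C N" by (rule md)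
    show "density_seq (Suc 0) C \<longlonglongrightarrow> 1 / real_of_int N" by (rule dens)
    show "finite S" by (simp add: S_def)
    show "is_anticode (Suc 0) S (N - 1)" by (rule anti)
    show "1 / real_of_int N * real (card S) = 1" using cardS N by simp
  qed
  then show ?thesis unfolding N_def by blast
qed



lemma single_one:
  fixes f :: "nat \<Rightarrow> int"
  assumes fin: "finite A" and nn: "\<And>i. i \<in> A \<Longrightarrow> f i \<ge> 0" and s: "sum f A = 1"
  shows "\<exists>i\<in>A. f i = 1 \<and> (\<forall>l\<in>A. l \<noteq> i \<longrightarrow> f l = 0)"
proof -
  obtain i where i: "i \<in> A" "f i \<noteq> 0"
  proof (rule ccontr)
    assume "\<not> thesis"
    then have "\<forall>i\<in>A. f i = 0" using that by blast
    then have "sum f A = 0" by simp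
    then show False using s by simp
  qed
  have split: "sum f A = f i + sum f (A - {i})" using fin i by (simp add: sum.remove)
  have r0: "sum f (A - {i}) \<ge> 0" by (intro sum_nonneg) (use nn in auto)
  have fi: "f i = 1" using split r0 s i nn[OF i(1)] by linarith
  then have "sum f (A - {i}) = 0" using split s by simp
  then have "\<forall>l\<in>A - {i}. f l = 0" using sum_nonneg_eq_0_iff[of "A - {i}" f] fin nn by auto
  then show ?thesis using i fi by blast
qed

lemma weighted_single:
  fixes f w :: "nat \<Rightarrow> int"
  assumes "finite A" "i \<in> A" "f i = 1" "\<forall>l\<in>A. l \<noteq> i \<longrightarrow> f l = 0"
  shows "(\<Sum>l\<in>A. w l * f l) = w i"
proof -
  have "(\<Sum>l\<in>A. w l * f l) = w i * f i + (\<Sum>l\<in>A - {i}. w l * f l)"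
    using assms by (simp add: sum.remove)
  also have "(\<Sum>l\<in>A - {i}. w l * f l) = 0" using assms by (intro sum.neutral) auto
  finally show ?thesis using assms by simp
qed

lemma no_dvd_small:
  fixes u :: "nat \<Rightarrow> int"
  assumes nz: "\<exists>i<m. u i \<noteq> 0"
    and P: "(\<Sum>i<m. max (u i) 0) \<le> 1" and Q: "(\<Sum>i<m. max (- u i) 0) \<le> 1"
  shows "\<not> int (m + 1) dvd (\<Sum>i<m. int (i + 1) * u i)"
proof
  assume dv: "int (m + 1) dvd (\<Sum>i<m. int (i + 1) * u i)"
  define p where "p = (\<lambda>i. max (u i) 0)"
  define q where "q = (\<lambda>i. max (- u i) 0)"
  define WP where "WP = (\<Sum>i<m. int (i + 1) * p i)"
  define WN where "WN = (\<Sum>i<m. int (i + 1) * q i)"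
  have D: "(\<Sum>i<m. int (i + 1) * u i) = WP - WN"
  proof -
    have "(\<Sum>i<m. int (i + 1) * u i) = (\<Sum>i<m. int (i + 1) * p i - int (i + 1) * q i)"
      by (rule sum.cong) (auto simp: p_def q_def max_def algebra_simps)
    then show ?thesis by (simp add: WP_def WN_def sum_subtractf)
  qed
  have pn: "\<And>i. p i \<ge> 0" "\<And>i. q i \<ge> 0" by (auto simp: p_def q_def)
  have WPl: "sum p {..<m} \<le> WP" unfolding WP_def
  proof (rule sum_mono)
    fix i show "p i \<le> int (i+1) * p i" using mult_right_mono[of 1 "int (i+1)" "p i"] pn by simp
  qed
  have WPu: "WP \<le> int m * sum p {..<m}" unfolding WP_def sum_distrib_left
    by (rule sum_mono) (use pn in \<open>auto intro: mult_right_mono\<close>)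
  have WNl: "sum q {..<m} \<le> WN" unfolding WN_def
  proof (rule sum_mono)
    fix i show "q i \<le> int (i+1) * q i" using mult_right_mono[of 1 "int (i+1)" "q i"] pn by simp
  qed
  have WNu: "WN \<le> int m * sum q {..<m}" unfolding WN_def sum_distrib_left
    by (rule sum_mono) (use pn in \<open>auto intro: mult_right_mono\<close>)
  have sp: "sum p {..<m} \<ge> 0" "sum q {..<m} \<ge> 0" using pn by (auto intro: sum_nonneg)
  have Pp: "sum p {..<m} \<le> 1" "sum q {..<m} \<le> 1" using P Q by (auto simp: p_def q_def)
  have dv': "int (m + 1) dvd WP - WN" using dv D by simp
  consider "sum p {..<m} = 0" "sum q {..<m} = 0" | "sum p {..<m} = 1" "sum q {..<m} = 0"
    | "sum p {..<m} = 0" "sum q {..<m} = 1" | "sum p {..<m} = 1" "sum q {..<m} = 1"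
    using sp Pp by linarith
  then show False
  proof cases
    case 1
    then have "\<forall>i\<in>{..<m}. p i = 0" "\<forall>i\<in>{..<m}. q i = 0"
      using sum_nonneg_eq_0_iff[of "{..<m}" p] sum_nonneg_eq_0_iff[of "{..<m}" q] pn by auto
    then have "\<forall>i<m. u i = 0"
    proof (intro allI impI)
      fix i assume "i < m"
      then have "max (u i) 0 = 0" "max (- u i) 0 = 0" using \<open>\<forall>i\<in>{..<m}. p i = 0\<close> \<open>\<forall>i\<in>{..<m}. q i = 0\<close>
        by (auto simp: p_def q_def)
      then show "u i = 0" by linarith
    qed
    then show False using nz by auto
  next
    case 2
    then have "WN = 0" using WNl WNu by simp
    then have "WP - WN > 0" "WP - WN < int (m + 1)" using 2 WPl WPu by auto
    then show False using dv' zdvd_imp_le by fastforce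
  next
    case 3
    then have "WP = 0" using WPl WPu by simp
    then have "WN - WP > 0" "WN - WP < int (m + 1)" using 3 WNl WNu by auto
    moreover have "int (m + 1) dvd WN - WP" using dv' by (metis dvd_minus_iff minus_diff_eq)
    ultimately show False using zdvd_imp_le by fastforce
  next
    case 4
    obtain i where i: "i \<in> {..<m}" "p i = 1" "\<forall>l\<in>{..<m}. l \<noteq> i \<longrightarrow> p l = 0"
      using single_one[of "{..<m}" p] 4 pn by auto
    obtain j where j: "j \<in> {..<m}" "q j = 1" "\<forall>l\<in>{..<m}. l \<noteq> j \<longrightarrow> q l = 0"
      using single_one[of "{..<m}" q] 4 pn by auto
    have "WP = int (i + 1)" unfolding WP_def by (rule weighted_single) (use i in auto)
    moreover have "WN = int (j + 1)" unfolding WN_def by (rule weighted_single) (use j in auto)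
    moreover have "i \<noteq> j" using i(2) j(2) by (auto simp: p_def q_def max_def split: if_splits)
    ultimately have "WP - WN \<noteq> 0" "\<bar>WP - WN\<bar> < int (m + 1)" using i(1) j(1) by auto
    then show False using dv' by (metis dvd_imp_le_int not_less abs_of_nat)
  qed
qed


lemma dist_le1:
  assumes "\<And>i. x i \<ge> 0" "\<And>i. y i \<ge> 0" "(\<Sum>i<m. x i) \<le> 1" "(\<Sum>i<m. y i) \<le> 1"
  shows "dist_a m x y \<le> 1"
proof -
  have "(\<Sum>i<m. max (x i - y i) 0) \<le> (\<Sum>i<m. x i)" by (rule sum_mono) (use assms in auto)
  moreover have "(\<Sum>i<m. max (y i - x i) 0) \<le> (\<Sum>i<m. y i)" by (rule sum_mono) (use assms in auto)
  ultimately show ?thesis using assms by (simp add: dist_a_alt)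
qed

definition ev :: "nat \<Rightarrow> nat \<Rightarrow> int" where "ev j = (\<lambda>i. if i = j then 1 else 0)"

lemma case3:
  assumes n: "n \<ge> 1"
  shows "\<exists>C. diameter_perfect (Suc n) C 2"
proof -
  define N where "N = int (Suc n + 1)"
  have N: "N > 0" by (simp add: N_def)
  define w where "w = (\<lambda>x::nat\<Rightarrow>int. \<Sum>i<Suc n. int (i + 1) * x i)"
  define C where "C = {x\<in>lattice_pts (Suc n). N dvd w x}"
  have sub: "C \<subseteq> lattice_pts (Suc n)" by (auto simp: C_def)
  have md: "has_min_dist (Suc n) C 2"
    unfolding has_min_dist_def
  proof (intro conjI ballI impI)
    fix x y assume xy: "x \<in> C" "y \<in> C" "x \<noteq> y"
    define u where "u = (\<lambda>i. x i - y i)"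
    have nz: "\<exists>i<Suc n. u i \<noteq> 0"
    proof (rule ccontr)
      assume "\<not> ?thesis"
      then have "\<forall>i. x i = y i" using xy unfolding C_def lattice_pts_def u_def
        by (metis (mono_tags, lifting) eq_iff_diff_eq_0 mem_Collect_eq not_less)
      then show False using xy by auto
    qed
    have dvu: "int (Suc n + 1) dvd (\<Sum>i<Suc n. int (i + 1) * u i)"
    proof -
      have "(\<Sum>i<Suc n. int (i + 1) * u i) = w x - w y"
        by (simp add: w_def u_def sum_subtractf algebra_simps)
      then show ?thesis using xy by (auto simp: C_def N_def)
    qed
    have dd: "dist_a (Suc n) x y = max (\<Sum>i<Suc n. max (u i) 0) (\<Sum>i<Suc n. max (- u i) 0)"
      by (simp add: dist_a_alt u_def)
    show "2 \<le> dist_a (Suc n) x y"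
    proof (rule ccontr)
      assume "\<not> 2 \<le> dist_a (Suc n) x y"
      then have "(\<Sum>i<Suc n. max (u i) 0) \<le> 1" "(\<Sum>i<Suc n. max (- u i) 0) \<le> 1" using dd by auto
      then show False using no_dvd_small[OF nz] dvu by blast
    qed
  next
    define v where "v = (\<lambda>i::nat. if i = 0 \<or> i = n then (1::int) else 0)"
    define z where "z = (\<lambda>i::nat. 0::int)"
    have s1: "(\<Sum>i<n. f i * v i) = f 0" for f :: "nat \<Rightarrow> int"
    proof -
      have "(\<Sum>i<n. f i * v i) = (\<Sum>i<n. if i = 0 then f i else 0)"
        by (rule sum.cong) (auto simp: v_def)
      also have "\<dots> = f 0" using n by (simp add: sum.delta)
      finally show ?thesis .
    qed
    have wv: "w v = N" using s1[of "\<lambda>i. int (i+1)"] by (simp add: w_def N_def v_def)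
    have sv: "(\<Sum>i<Suc n. v i) = 2" using s1[of "\<lambda>i. 1"] by (simp add: v_def)
    have "v \<in> C" using wv n by (auto simp: C_def lattice_pts_def v_def)
    moreover have "z \<in> C" by (simp add: C_def lattice_pts_def z_def w_def)
    moreover have "z \<noteq> v" by (auto simp: z_def v_def fun_eq_iff)
    moreover have "dist_a (Suc n) z v = 2"
    proof -
      have "(\<Sum>i<Suc n. max (z i - v i) 0) = 0" by (rule sum.neutral) (auto simp: z_def v_def)
      moreover have "(\<Sum>i<Suc n. max (v i - z i) 0) = (\<Sum>i<Suc n. v i)"
        by (rule sum.cong) (auto simp: z_def v_def)
      ultimately show ?thesis using sv by (simp add: dist_a_alt)
    qed
    ultimately show "\<exists>x\<in>C. \<exists>y\<in>C. x \<noteq> y \<and> dist_a (Suc n) x y = 2" by blast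
  qed
  have dens: "density_seq (Suc n) C \<longlonglongrightarrow> 1 / real_of_int N"
  proof (rule dens_lim[where B = "3 * real_of_int N"])
    show "real_of_int N > 0" using N by simp
    fix k
    define F where "F = (\<lambda>y. card {t\<in>{-int k..int k}. y(n:=t) \<in> C})"
    have cC: "card (C \<inter> box (Suc n) k) = (\<Sum>y\<in>box n k. F y)"
      unfolding F_def using sub by (rule box_fiber)
    have Fb: "\<bar>real_of_int N * real (F y) - (2 * real k + 1)\<bar> \<le> 3 * real_of_int N" if y: "y \<in> box n k" for y
    proof -
      define s where "s = (\<Sum>i<n. int (i + 1) * y i)"
      have "{t\<in>{-int k..int k}. y(n:=t) \<in> C} = {t\<in>{-int k..int k}. t mod N = s mod N}"
      proof -
        have lat: "y(n:=t) \<in> lattice_pts (Suc n)" for t using y by (auto simp: box_def lattice_pts_def)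
        have wt: "w (y(n:=t)) = s + (N - 1) * t" for t
        proof -
          have "(\<Sum>i<n. int (i + 1) * (y(n:=t)) i) = s" unfolding s_def by (rule sum.cong) auto
          then show ?thesis by (simp add: w_def N_def)
        qed
        have "N dvd s + (N - 1) * t \<longleftrightarrow> t mod N = s mod N" for t
        proof -
          have eq: "s + (N - 1) * t = (s - t) + t * N" by (simp add: algebra_simps)
          have "N dvd s + (N - 1) * t \<longleftrightarrow> N dvd s - t"
            unfolding eq by (rule dvd_add_times_triv_right_iff)
          also have "\<dots> \<longleftrightarrow> t mod N = s mod N" by (metis mod_eq_dvd_iff)
          finally show ?thesis .
        qed
        then show ?thesis using lat wt by (auto simp: C_def)
      qed
      then show ?thesis unfolding F_def using count1_real[OF N, of k s] by simp
    qed
    have "\<bar>(\<Sum>y\<in>box n k. real_of_int N * real (F y)) - real (card (box n k)) * (2 * real k + 1)\<bar>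
        \<le> real (card (box n k)) * (3 * real_of_int N)"
      by (rule sum_approx) (use Fb finite_box in auto)
    moreover have "(\<Sum>y\<in>box n k. real_of_int N * real (F y)) = real_of_int N * real (card (C \<inter> box (Suc n) k))"
      by (simp add: cC sum_distrib_left)
    moreover have "real (card (box n k)) = (2 * real k + 1) ^ n" by (simp add: card_box add.commute)
    ultimately show "\<bar>real_of_int N * real (card (C \<inter> box (Suc n) k)) - (2 * real k + 1) ^ Suc n\<bar>
          \<le> 3 * real_of_int N * (2 * real k + 1) ^ n"
      by (simp add: algebra_simps)
  qed
  define S where "S = insert (\<lambda>_. 0) (ev ` {..<Suc n})"
  have injS: "inj_on ev {..<Suc n}"
  proof (rule inj_onI)
    fix a b assume "ev a = ev b"
    then have "ev a a = ev b a" by simp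
    then show "a = b" by (simp add: ev_def split: if_splits)
  qed
  have notin: "(\<lambda>_. 0) \<notin> ev ` {..<Suc n}"
  proof
    assume "(\<lambda>_. 0) \<in> ev ` {..<Suc n}"
    then obtain j where "(\<lambda>_. 0::int) = ev j" by auto
    then have "(0::int) = ev j j" by (metis)
    then show False by (simp add: ev_def)
  qed
  have cardS: "card S = Suc n + 1" unfolding S_def using injS notin by (simp add: card_image)
  have sumev: "(\<Sum>i<Suc n. ev j i) \<le> 1" for j
  proof -
    have "(\<Sum>i<Suc n. ev j i) = (\<Sum>i<Suc n. if i = j then 1 else 0)" by (simp add: ev_def)
    also have "\<dots> \<le> 1" by (simp add: sum.delta)
    finally show ?thesis .
  qed
  have pts: "\<forall>x\<in>S. (\<forall>i. x i \<ge> 0) \<and> (\<Sum>i<Suc n. x i) \<le> 1"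
    using sumev by (auto simp: S_def ev_def)
  have anti: "is_anticode (Suc n) S (2 - 1)"
    unfolding is_anticode_def
  proof (intro conjI ballI)
    show "S \<subseteq> lattice_pts (Suc n)" by (auto simp: S_def lattice_pts_def ev_def)
    fix x y assume "x \<in> S" "y \<in> S"
    then show "dist_a (Suc n) x y \<le> 2 - 1" using pts dist_le1[of x y "Suc n"] by simp
  qed
  have "diameter_perfect (Suc n) C 2"
    unfolding diameter_perfect_def
  proof (intro conjI exI)
    show "C \<subseteq> lattice_pts (Suc n)" by (rule sub)
    show "has_min_dist (Suc n) C 2" by (rule md)
    show "density_seq (Suc n) C \<longlonglongrightarrow> 1 / real_of_int N" by (rule dens)
    show "finite S" by (simp add: S_def)
    show "is_anticode (Suc n) S (2 - 1)" by (rule anti)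
    show "1 / real_of_int N * real (card S) = 1" using cardS N by (simp add: N_def)
  qed
  then show ?thesis by blast
qed


definition pt2 :: "int \<Rightarrow> int \<Rightarrow> nat \<Rightarrow> int" where
  "pt2 a b = (\<lambda>i. if i = 0 then a else if i = 1 then b else 0)"

lemma dist2: "dist_a 2 x y = max (max (x 0 - y 0) 0 + max (x 1 - y 1) 0) (max (y 0 - x 0) 0 + max (y 1 - x 1) 0)"
  by (simp add: dist_a_alt numeral_2_eq_2)

lemma lat2_eq:
  assumes "x \<in> lattice_pts 2" "y \<in> lattice_pts 2" "x 0 = y 0" "x 1 = y 1" shows "x = y"
proof
  fix i show "x i = y i"
  proof (cases "i < 2")
    case True then have "i = 0 \<or> i = 1" by auto
    then show ?thesis using assms by auto
  next
    case False then show ?thesis using assms unfolding lattice_pts_def by auto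
  qed
qed

lemma max_mult0: "(r::int) \<ge> 0 \<Longrightarrow> max (r * p) 0 = r * max p 0"
  by (cases "p \<ge> 0") (auto simp: max_def mult_le_0_iff)

lemma max_mult2:
  fixes R u v :: int
  assumes "R \<ge> 0" shows "max (R * u) (R * v) = R * max u v"
proof (cases "u \<le> v")
  case True then have "R * u \<le> R * v" using assms by (simp add: mult_left_mono)
  then show ?thesis using True by (simp add: max_def)
next
  case False then have "R * v \<le> R * u" using assms by (simp add: mult_left_mono)
  then show ?thesis using False by (simp add: max_def)
qed

lemma case2:
  assumes r: "r \<ge> 1"
  shows "\<exists>C. diameter_perfect 2 C (2 * int r)"
proof -
  define R where "R = int r"
  have R: "R \<ge> 1" using r by (simp add: R_def)
  define C where "C = {x\<in>lattice_pts 2. R dvd x 0 \<and> (3 * R) dvd (x 1 - x 0)}"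
  have sub: "C \<subseteq> lattice_pts 2" by (auto simp: C_def)
  have md: "has_min_dist 2 C (2 * R)"
    unfolding has_min_dist_def
  proof (intro conjI ballI impI)
    fix x y assume xy: "x \<in> C" "y \<in> C" "x \<noteq> y"
    have "R dvd x 0 - y 0" using xy by (auto simp: C_def)
    then obtain a where a: "x 0 - y 0 = R * a" by (auto elim: dvdE)
    have "3 * R dvd (x 1 - x 0) - (y 1 - y 0)" using xy by (auto simp: C_def)
    then obtain s where s: "(x 1 - x 0) - (y 1 - y 0) = 3 * R * s" by (auto elim: dvdE)
    define b where "b = a + 3 * s"
    have b: "x 1 - y 1 = R * b" using a s by (simp add: b_def algebra_simps)
    have ne: "a \<noteq> 0 \<or> b \<noteq> 0"
    proof (rule ccontr)
      assume "\<not> ?thesis"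
      then have "x 0 = y 0" "x 1 = y 1" using a b by auto
      then show False using xy lat2_eq sub by blast
    qed
    have M: "max (max a 0 + max b 0) (max (- a) 0 + max (- b) 0) \<ge> 2"
      using ne b_def by (simp add: max_def) presburger
    have R0: "R \<ge> 0" using R by simp
    have "dist_a 2 x y = max (max (R * a) 0 + max (R * b) 0) (max (R * - a) 0 + max (R * - b) 0)"
      using a b by (simp add: dist2 algebra_simps)
    also have "\<dots> = max (R * (max a 0 + max b 0)) (R * (max (- a) 0 + max (- b) 0))"
      using R0 by (simp only: max_mult0 distrib_left)
    also have "\<dots> = R * max (max a 0 + max b 0) (max (- a) 0 + max (- b) 0)"
      using R0 by (rule max_mult2)
    finally have "dist_a 2 x y = R * max (max a 0 + max b 0) (max (- a) 0 + max (- b) 0)" .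
    moreover have "R * 2 \<le> R * max (max a 0 + max b 0) (max (- a) 0 + max (- b) 0)"
      using M R0 by (rule mult_left_mono)
    ultimately show "2 * R \<le> dist_a 2 x y" by simp
  next
    show "\<exists>x\<in>C. \<exists>y\<in>C. x \<noteq> y \<and> dist_a 2 x y = 2 * R"
    proof -
      have "pt2 0 0 \<in> C" "pt2 R R \<in> C" by (auto simp: C_def pt2_def lattice_pts_def)
      moreover have "pt2 0 0 \<noteq> pt2 R R" using R by (auto simp: pt2_def fun_eq_iff)
      moreover have "dist_a 2 (pt2 0 0) (pt2 R R) = 2 * R" using R by (simp add: dist2 pt2_def)
      ultimately show ?thesis by blast
    qed
  qed
  have dens: "density_seq 2 C \<longlonglongrightarrow> 1 / (3 * real_of_int R ^ 2)"
  proof -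
    have "density_seq (Suc 1) C \<longlonglongrightarrow> 1 / (3 * real_of_int R ^ 2)"
    proof (rule dens_lim[where B = "9 * real_of_int R ^ 2 + 3 * real_of_int R"])
      show "3 * real_of_int R ^ 2 > 0" using R by simp
      fix k
      define P where "P = 2 * real k + 1"
      define G where "G = (\<lambda>y::nat\<Rightarrow>int. card {t\<in>{-int k..int k}. t mod (3 * R) = y 0 mod (3 * R)})"
      define A where "A = {y\<in>box 1 k. R dvd y 0}"
      have finA: "finite A" by (simp add: A_def finite_box)
      have cC: "card (C \<inter> box (Suc 1) k) = (\<Sum>y\<in>box 1 k. card {t\<in>{-int k..int k}. y(1:=t) \<in> C})"
        using sub by (intro box_fiber) (simp add: numeral_2_eq_2)
      also have "\<dots> = (\<Sum>y\<in>box 1 k. if R dvd y 0 then G y else 0)"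
      proof (rule sum.cong)
        fix y assume y: "y \<in> box 1 k"
        have lat: "y(1:=t) \<in> lattice_pts 2" for t using y by (auto simp: box_def lattice_pts_def)
        have "{t\<in>{-int k..int k}. y(1:=t) \<in> C} =
            (if R dvd y 0 then {t\<in>{-int k..int k}. t mod (3 * R) = y 0 mod (3 * R)} else {})"
          using lat by (auto simp: C_def mod_eq_dvd_iff)
        then show "card {t\<in>{-int k..int k}. y(1:=t) \<in> C} = (if R dvd y 0 then G y else 0)"
          by (simp add: G_def)
      qed simp
      also have "\<dots> = (\<Sum>y\<in>A. G y)" unfolding A_def
        by (rule sum.inter_filter[symmetric]) (simp add: finite_box)
      finally have cX: "card (C \<inter> box 2 k) = (\<Sum>y\<in>A. G y)" by (simp add: numeral_2_eq_2)
      have Gb: "\<bar>real_of_int (3 * R) * real (G y) - P\<bar> \<le> 3 * real_of_int (3 * R)" for y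
        unfolding G_def P_def by (rule count1_real) (use R in simp)
      have h1: "\<bar>(\<Sum>y\<in>A. real_of_int (3 * R) * real (G y)) - real (card A) * P\<bar> \<le> real (card A) * (3 * real_of_int (3 * R))"
        by (rule sum_approx) (use finA Gb in auto)
      have cA: "card A = card {t\<in>{-int k..int k}. t mod R = 0 mod R}"
      proof -
        define C' where "C' = {x\<in>lattice_pts 1. R dvd x 0}"
        have "A = C' \<inter> box (Suc 0) k" by (auto simp: A_def C'_def box_def)
        then have "card A = (\<Sum>y\<in>box 0 k. card {t\<in>{-int k..int k}. y(0:=t) \<in> C'})"
          by (simp add: box_fiber C'_def)
        also have "\<dots> = card {t\<in>{-int k..int k}. t mod R = 0 mod R}"
        proof -
          have "{t\<in>{-int k..int k}. (\<lambda>_. 0::int)(0:=t) \<in> C'} = {t\<in>{-int k..int k}. t mod R = 0 mod R}"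
            by (auto simp: C'_def lattice_pts_def dvd_eq_mod_eq_0)
          then show ?thesis by (simp add: box0)
        qed
        finally show ?thesis .
      qed
      have h2: "\<bar>real_of_int R * real (card A) - P\<bar> \<le> 3 * real_of_int R"
        unfolding cA P_def by (rule count1_real) (use R in simp)
      have cAle: "real (card A) \<le> P"
      proof -
        have "card A \<le> card (box 1 k)" by (rule card_mono) (auto simp: A_def finite_box)
        then show ?thesis by (simp add: card_box P_def)
      qed
      define X where "X = real (card (C \<inter> box 2 k))"
      define Rr where "Rr = real_of_int R"
      define cAr where "cAr = real (card A)"
      have Rr: "Rr \<ge> 1" using R by (simp add: Rr_def)
      have Ppos: "P > 0" by (simp add: P_def)
      have h1': "\<bar>3 * Rr * X - cAr * P\<bar> \<le> 9 * Rr * cAr"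
      proof -
        have "(\<Sum>y\<in>A. real_of_int (3 * R) * real (G y)) = 3 * Rr * X"
          by (simp add: X_def cX Rr_def sum_distrib_left[symmetric])
        then show ?thesis using h1 by (simp add: cAr_def Rr_def algebra_simps)
      qed
      have h2': "\<bar>Rr * cAr - P\<bar> \<le> 3 * Rr" using h2 by (simp add: Rr_def cAr_def)
      have split: "3 * Rr ^ 2 * X - P ^ 2 = Rr * (3 * Rr * X - cAr * P) + P * (Rr * cAr - P)"
        by (simp add: algebra_simps power2_eq_square)
      have e1: "\<bar>Rr * (3 * Rr * X - cAr * P)\<bar> \<le> 9 * Rr ^ 2 * P"
      proof -
        have "\<bar>Rr * (3 * Rr * X - cAr * P)\<bar> = Rr * \<bar>3 * Rr * X - cAr * P\<bar>" using Rr by (simp add: abs_mult)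
        also have "\<dots> \<le> Rr * (9 * Rr * cAr)" using h1' Rr by (intro mult_left_mono) auto
        also have "\<dots> \<le> Rr * (9 * Rr * P)" using cAle Rr by (intro mult_left_mono) (auto simp: cAr_def)
        finally show ?thesis by (simp add: power2_eq_square algebra_simps)
      qed
      have e2: "\<bar>P * (Rr * cAr - P)\<bar> \<le> P * (3 * Rr)"
      proof -
        have "\<bar>P * (Rr * cAr - P)\<bar> = P * \<bar>Rr * cAr - P\<bar>" using Ppos by (simp add: abs_mult)
        also have "\<dots> \<le> P * (3 * Rr)" using h2' Ppos by (intro mult_left_mono) auto
        finally show ?thesis .
      qed
      have "\<bar>3 * Rr ^ 2 * X - P ^ 2\<bar> \<le> (9 * Rr ^ 2 + 3 * Rr) * P"
        unfolding split using e1 e2 abs_triangle_ineq[of "Rr * (3 * Rr * X - cAr * P)" "P * (Rr * cAr - P)"]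
        by (simp add: algebra_simps)
      then show "\<bar>3 * real_of_int R ^ 2 * real (card (C \<inter> box (Suc 1) k)) - (2 * real k + 1) ^ Suc 1\<bar>
          \<le> (9 * real_of_int R ^ 2 + 3 * real_of_int R) * (2 * real k + 1) ^ 1"
        by (simp add: X_def Rr_def P_def numeral_2_eq_2 power2_eq_square)
    qed
    then show ?thesis by (simp add: numeral_2_eq_2)
  qed
  define f where "f = (\<lambda>(i::int, j::int). if j < R + i then pt2 i (j + R - i) else pt2 (i + R) (j - R - i))"
  define D where "D = {0..<R} \<times> {0..<3 * R}"
  define S where "S = f ` D"
  have range: "0 \<le> p 0 \<and> p 0 \<le> 2 * R - 1 \<and> 0 \<le> p 1 \<and> p 1 \<le> 2 * R - 1 \<and> R \<le> p 0 + p 1 \<and> p 0 + p 1 \<le> 3 * R - 1"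
    if "p \<in> S" for p
    using that by (auto simp: S_def D_def f_def pt2_def)
  have injf: "inj_on f D"
  proof (rule inj_onI)
    fix u v assume uv: "u \<in> D" "v \<in> D" "f u = f v"
    obtain i j where u: "u = (i, j)" by (cases u)
    obtain i' j' where v: "v = (i', j')" by (cases v)
    have "f u 0 = f v 0" "f u 1 = f v 1" using uv by auto
    then show "u = v" using uv(1,2) unfolding u v D_def f_def pt2_def
      by (auto split: if_splits)
  qed
  have cardS: "card S = nat R * nat (3 * R)"
    unfolding S_def using injf by (simp add: card_image D_def card_cartesian_product)
  have anti: "is_anticode 2 S (2 * R - 1)"
    unfolding is_anticode_def
  proof (intro conjI ballI)
    show "S \<subseteq> lattice_pts 2" by (auto simp: S_def D_def f_def pt2_def lattice_pts_def)
    fix x y assume "x \<in> S" "y \<in> S"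
    then show "dist_a 2 x y \<le> 2 * R - 1" using range[of x] range[of y]
      by (simp add: dist2 max_def)
  qed
  have "diameter_perfect 2 C (2 * R)"
    unfolding diameter_perfect_def
  proof (intro conjI exI)
    show "C \<subseteq> lattice_pts 2" by (rule sub)
    show "has_min_dist 2 C (2 * R)" by (rule md)
    show "density_seq 2 C \<longlonglongrightarrow> 1 / (3 * real_of_int R ^ 2)" by (rule dens)
    show "finite S" by (simp add: S_def D_def)
    show "is_anticode 2 S (2 * R - 1)" by (rule anti)
    have "real (card S) = 3 * real_of_int R ^ 2" using R
      by (simp add: cardS power2_eq_square)
    then show "1 / (3 * real_of_int R ^ 2) * real (card S) = 1" using R by simp
  qed
  then show ?thesis unfolding R_def by blast
qed


theorem mainTheorem12:
  fixes m r :: nat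
  assumes "(m \<in> {1, 2} \<and> r \<ge> 1) \<or> (m \<ge> 3 \<and> r = 1)"
  shows "\<exists>C. diameter_perfect m C (2 * int r)"
proof -
  consider "m = 1" "r \<ge> 1" | "m = 2" "r \<ge> 1" | "m \<ge> 3" "r = 1" using assms by auto
  then show ?thesis
  proof cases
    case 1 then show ?thesis using case1 by simp
  next
    case 2 then show ?thesis using case2 by simp
  next
    case 3
    define n where "n = m - 1"
    have n: "m = Suc n" "n \<ge> 1" using 3 by (auto simp: n_def)
    then show ?thesis using case3[OF n(2)] 3 by simp
  qed
qed

end
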